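(* Let $m\in\mathbb{N}$ and $r\ge0$. For all integers $l,n\ge0$, \[ D^{(r)}_{m}(l+n,x)=\sum_{j=0}^{l}\sum_{k=0}^{n}\binom{n}{k}W^{(r)}_{m}(l,j)\,x^{j}\,(mj)^{n-k}\,D^{(r)}_{m}(k,x). \]
   Context: $(x)_k=x(x-1)\cdots(x-k+1)$. For $m\in\mathbb{N}$ and $r\ge0$, the $r$-Whitney numbers of the second kind $W^{(r)}_{m}(n,k)$ are defined by $(mx+r)^{n}=\sum_{k=0}^{n}W^{(r)}_{m}(n,k)m^{k}(x)_k$ ($n\ge0$), and the $r$-Dowling polynomials are $D^{(r)}_{m}(n,x)=\sum_{k=0}^{n}W^{(r)}_{m}(n,k)x^{k}$. (Here $0^{0}=1$.) *)

theory Defs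
  imports Complex_Main
begin

definition falling_fact :: "real \<Rightarrow> nat \<Rightarrow> real" where
  "falling_fact x k = (\<Prod>i<k. x - of_nat i)"

text \<open>The coefficient row is taken as the unique function vanishing beyond n.\<close>
definition whitney2 :: "nat \<Rightarrow> real \<Rightarrow> nat \<Rightarrow> nat \<Rightarrow> real" where
  "whitney2 m r n = (THE c :: nat \<Rightarrow> real. (\<forall>k>n. c k = 0) \<and>
      (\<forall>x::real. (real m * x + r) ^ n = (\<Sum>k\<le>n. c k * real m ^ k * falling_fact x k)))"

definition dowling :: "nat \<Rightarrow> real \<Rightarrow> nat \<Rightarrow> real \<Rightarrow> real" where
  "dowling m r n x = (\<Sum>k\<le>n. whitney2 m r n k * x ^ k)"

end

theory Submission
  imports Defs
begin

fun W :: "nat \<Rightarrow> real \<Rightarrow> nat \<Rightarrow> nat \<Rightarrow> real" where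
  "W m r 0 k = (if k = 0 then 1 else 0)"
| "W m r (Suc n) k = (if k = 0 then 0 else W m r n (k - 1)) + (real m * real k + r) * W m r n k"

lemma W_zero: "k > n \<Longrightarrow> W m r n k = 0"
  by (induction n arbitrary: k) auto

lemma ff_Suc: "falling_fact x (Suc k) = falling_fact x k * (x - real k)"
  by (simp add: falling_fact_def)

lemma ff_add: "falling_fact x (j + i) = falling_fact x j * falling_fact (x - real j) i"
  by (induction i) (auto simp: falling_fact_def algebra_simps)

lemma ff_nat_zero: "j < k \<Longrightarrow> falling_fact (real j) k = 0"
  unfolding falling_fact_def by (rule prod_zero) auto

lemma ff_nat_self: "falling_fact (real j) j \<noteq> 0"
  unfolding falling_fact_def by (auto simp: prod_zero_iff)

lemma W_expand: "(real m * x + r) ^ n = (\<Sum>k\<le>n. W m r n k * real m ^ k * falling_fact x k)"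
proof (induction n)
  case 0
  then show ?case by (simp add: falling_fact_def)
next
  case (Suc n)
  have key: "(real m * x + r) * (W m r n k * real m ^ k * falling_fact x k)
     = W m r n k * real m ^ Suc k * falling_fact x (Suc k)
       + (real m * real k + r) * W m r n k * real m ^ k * falling_fact x k" for k
    by (simp add: ff_Suc algebra_simps)
  have "(real m * x + r) ^ Suc n = (\<Sum>k\<le>n. (real m * x + r) * (W m r n k * real m ^ k * falling_fact x k))"
    using Suc by (simp add: sum_distrib_left)
  also have "\<dots> = (\<Sum>k\<le>n. W m r n k * real m ^ Suc k * falling_fact x (Suc k))
      + (\<Sum>k\<le>n. (real m * real k + r) * W m r n k * real m ^ k * falling_fact x k)"
    by (simp add: key sum.distrib)
  also have "(\<Sum>k\<le>n. W m r n k * real m ^ Suc k * falling_fact x (Suc k))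
     = (\<Sum>k\<le>Suc n. (if k = 0 then 0 else W m r n (k - 1)) * real m ^ k * falling_fact x k)"
    by (subst sum.atMost_Suc_shift) simp
  also have "(\<Sum>k\<le>n. (real m * real k + r) * W m r n k * real m ^ k * falling_fact x k)
     = (\<Sum>k\<le>Suc n. (real m * real k + r) * W m r n k * real m ^ k * falling_fact x k)"
    by (simp add: W_zero)
  finally show ?case by (simp add: sum.distrib[symmetric] algebra_simps)
qed

lemma uniq:
  assumes m: "m \<ge> 1" and h: "\<forall>x. (\<Sum>k\<le>n. c k * real m ^ k * falling_fact x k) = 0"
  shows "k \<le> n \<Longrightarrow> c k = 0"
proof (induction k rule: less_induct)
  case (less j)
  have "0 = (\<Sum>k\<le>n. c k * real m ^ k * falling_fact (real j) k)" using h by simp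
  also have "\<dots> = (\<Sum>k\<in>{j}. c k * real m ^ k * falling_fact (real j) k)"
  proof (rule sum.mono_neutral_right)
    show "\<forall>i\<in>{..n} - {j}. c i * real m ^ i * falling_fact (real j) i = 0"
    proof
      fix i assume "i \<in> {..n} - {j}"
      then have "i < j \<or> j < i" by auto
      then show "c i * real m ^ i * falling_fact (real j) i = 0"
        using less by (auto simp: ff_nat_zero)
    qed
  qed (use less in auto)
  finally show ?case using m ff_nat_self[of j] by simp
qed

lemma whitney2_eq:
  assumes m: "m \<ge> 1"
  shows "whitney2 m r n = W m r n"
  unfolding whitney2_def
proof (rule the_equality)
  show "(\<forall>k>n. W m r n k = 0) \<and> (\<forall>x. (real m * x + r) ^ n = (\<Sum>k\<le>n. W m r n k * real m ^ k * falling_fact x k))"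
    by (simp add: W_zero W_expand)
next
  fix c assume c: "(\<forall>k>n. c k = 0) \<and> (\<forall>x. (real m * x + r) ^ n = (\<Sum>k\<le>n. c k * real m ^ k * falling_fact x k))"
  have "\<forall>x. (\<Sum>k\<le>n. (c k - W m r n k) * real m ^ k * falling_fact x k) = 0"
  proof
    fix x
    have "(\<Sum>k\<le>n. (c k - W m r n k) * real m ^ k * falling_fact x k)
      = (\<Sum>k\<le>n. c k * real m ^ k * falling_fact x k) - (\<Sum>k\<le>n. W m r n k * real m ^ k * falling_fact x k)"
      by (simp add: sum_subtractf[symmetric] algebra_simps)
    then show "(\<Sum>k\<le>n. (c k - W m r n k) * real m ^ k * falling_fact x k) = 0"
      using c W_expand[of m x r n] by simp
  qed
  from uniq[OF m this] have "k \<le> n \<Longrightarrow> c k = W m r n k" for k by force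
  then show "c = W m r n" using c W_zero[of n _ m r] by (metis le_less_linear ext)
qed

lemma shift_sum:
  fixes f g :: "nat \<Rightarrow> real"
  assumes "j + k \<le> N" "\<forall>i>k. f i = 0"
  shows "(\<Sum>t\<le>N. if j \<le> t then f (t - j) * g t else 0) = (\<Sum>i\<le>k. f i * g (i + j))"
proof -
  have "(\<Sum>t\<le>N. if j \<le> t then f (t - j) * g t else 0) = (\<Sum>t\<in>{j..N}. f (t - j) * g t)"
  proof -
    have "{t\<in>{..N}. j \<le> t} = {j..N}" by auto
    moreover have "(\<Sum>t\<le>N. if j \<le> t then f (t - j) * g t else 0) = (\<Sum>t\<in>{t\<in>{..N}. j \<le> t}. f (t - j) * g t)"
      by (simp only: sum.inter_filter[OF finite_atMost])
    ultimately show ?thesis by simp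
  qed
  also have "\<dots> = (\<Sum>i\<in>{0..N-j}. f i * g (i + j))"
    using assms(1)
    by (intro sum.reindex_bij_witness[where i="\<lambda>i. i + j" and j="\<lambda>t. t - j"]) auto
  also have "\<dots> = (\<Sum>i\<le>k. f i * g (i + j))"
    using assms by (intro sum.mono_neutral_right) auto
  finally show ?thesis .
qed

definition acoef :: "nat \<Rightarrow> real \<Rightarrow> nat \<Rightarrow> nat \<Rightarrow> nat \<Rightarrow> real" where
  "acoef m r l n t = (\<Sum>j\<le>l. \<Sum>k\<le>n. real (n choose k) * W m r l j * (real m * real j) ^ (n - k)
        * (if j \<le> t then W m r k (t - j) else 0))"

lemma a_sum:
  fixes g :: "nat \<Rightarrow> real"
  shows "(\<Sum>t\<le>l+n. acoef m r l n t * g t) = (\<Sum>j\<le>l. \<Sum>k\<le>n. real (n choose k) * W m r l j * (real m * real j) ^ (n - k)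
        * (\<Sum>i\<le>k. W m r k i * g (i + j)))"
proof -
  have "(\<Sum>t\<le>l+n. acoef m r l n t * g t) = (\<Sum>t\<le>l+n. \<Sum>j\<le>l. \<Sum>k\<le>n. real (n choose k) * W m r l j * (real m * real j) ^ (n - k)
        * (if j \<le> t then W m r k (t - j) * g t else 0))"
    unfolding acoef_def sum_distrib_right by (intro sum.cong refl) simp
  also have "\<dots> = (\<Sum>j\<le>l. \<Sum>k\<le>n. \<Sum>t\<le>l+n. real (n choose k) * W m r l j * (real m * real j) ^ (n - k)
        * (if j \<le> t then W m r k (t - j) * g t else 0))"
    by (subst sum.swap) (simp add: sum.swap[of _ "{..n}"])
  also have "\<dots> = (\<Sum>j\<le>l. \<Sum>k\<le>n. real (n choose k) * W m r l j * (real m * real j) ^ (n - k)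
        * (\<Sum>t\<le>l+n. if j \<le> t then W m r k (t - j) * g t else 0))"
    by (simp add: sum_distrib_left)
  also have "\<dots> = (\<Sum>j\<le>l. \<Sum>k\<le>n. real (n choose k) * W m r l j * (real m * real j) ^ (n - k)
        * (\<Sum>i\<le>k. W m r k i * g (i + j)))"
  proof (intro sum.cong refl)
    fix j k assume "j \<in> {..l}" "k \<in> {..n}"
    then have "j + k \<le> l + n" by auto
    then show "real (n choose k) * W m r l j * (real m * real j) ^ (n - k)
        * (\<Sum>t\<le>l+n. if j \<le> t then W m r k (t - j) * g t else 0) =
        real (n choose k) * W m r l j * (real m * real j) ^ (n - k)
        * (\<Sum>i\<le>k. W m r k i * g (i + j))"
      by (subst shift_sum) (auto simp: W_zero)
  qed
  finally show ?thesis .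
qed

lemma W_unique:
  assumes m: "m \<ge> 1" and c: "(\<forall>k>n. c k = 0) \<and> (\<forall>x. (real m * x + r) ^ n = (\<Sum>k\<le>n. c k * real m ^ k * falling_fact x k))"
  shows "c = W m r n"
proof -
  have "\<forall>x. (\<Sum>k\<le>n. (c k - W m r n k) * real m ^ k * falling_fact x k) = 0"
  proof
    fix x
    have "(\<Sum>k\<le>n. (c k - W m r n k) * real m ^ k * falling_fact x k)
      = (\<Sum>k\<le>n. c k * real m ^ k * falling_fact x k) - (\<Sum>k\<le>n. W m r n k * real m ^ k * falling_fact x k)"
      by (simp add: sum_subtractf[symmetric] algebra_simps)
    then show "(\<Sum>k\<le>n. (c k - W m r n k) * real m ^ k * falling_fact x k) = 0"
      using c W_expand[of m x r n] by simp
  qed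
  from uniq[OF m this] have "k \<le> n \<Longrightarrow> c k = W m r n k" for k by force
  then show "c = W m r n" using c W_zero[of n _ m r] by (metis le_less_linear ext)
qed

lemma acoef_zero: "t > l + n \<Longrightarrow> acoef m r l n t = 0"
  unfolding acoef_def by (intro sum.neutral ballI) (auto simp: W_zero)

lemma acoef_expand: "(real m * x + r) ^ (l + n) = (\<Sum>t\<le>l+n. acoef m r l n t * real m ^ t * falling_fact x t)"
proof -
  have "(\<Sum>t\<le>l+n. acoef m r l n t * real m ^ t * falling_fact x t)
     = (\<Sum>t\<le>l+n. acoef m r l n t * (real m ^ t * falling_fact x t))" by (simp add: mult.assoc)
  also have "\<dots> = (\<Sum>j\<le>l. \<Sum>k\<le>n. real (n choose k) * W m r l j * (real m * real j) ^ (n - k)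
        * (\<Sum>i\<le>k. W m r k i * (real m ^ (i + j) * falling_fact x (i + j))))"
    by (rule a_sum)
  also have "\<dots> = (\<Sum>j\<le>l. W m r l j * real m ^ j * falling_fact x j * (\<Sum>k\<le>n. real (n choose k) * 
         (real m * (x - real j) + r) ^ k * (real m * real j) ^ (n - k)))"
  proof (intro sum.cong refl)
    fix j
    have "(\<Sum>i\<le>k. W m r k i * (real m ^ (i + j) * falling_fact x (i + j))) =
          real m ^ j * falling_fact x j * (real m * (x - real j) + r) ^ k" for k
    proof -
      have *: "W m r k i * (real m ^ (i + j) * falling_fact x (i + j)) =
         (real m ^ j * falling_fact x j) * (W m r k i * real m ^ i * falling_fact (x - real j) i)" for i
        using ff_add[of x j i] by (simp add: power_add add.commute[of i j] mult_ac)
      have "(\<Sum>i\<le>k. W m r k i * (real m ^ (i + j) * falling_fact x (i + j))) =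
         (real m ^ j * falling_fact x j) * (\<Sum>i\<le>k. W m r k i * real m ^ i * falling_fact (x - real j) i)"
        unfolding sum_distrib_left by (rule sum.cong) (auto simp only: *)
      then show ?thesis by (simp add: W_expand[of m "x - real j" r k])
    qed
    then show "(\<Sum>k\<le>n. real (n choose k) * W m r l j * (real m * real j) ^ (n - k)
        * (\<Sum>i\<le>k. W m r k i * (real m ^ (i + j) * falling_fact x (i + j)))) =
        W m r l j * real m ^ j * falling_fact x j * (\<Sum>k\<le>n. real (n choose k) * 
         (real m * (x - real j) + r) ^ k * (real m * real j) ^ (n - k))"
      by (simp add: sum_distrib_left mult_ac)
  qed
  also have "\<dots> = (\<Sum>j\<le>l. W m r l j * real m ^ j * falling_fact x j * (real m * x + r) ^ n)"
  proof (intro sum.cong refl)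
    fix j
    have "(real m * x + r) ^ n = ((real m * (x - real j) + r) + real m * real j) ^ n"
      by (simp add: algebra_simps)
    also have "\<dots> = (\<Sum>k\<le>n. real (n choose k) * 
         (real m * (x - real j) + r) ^ k * (real m * real j) ^ (n - k))"
      by (rule binomial_ring)
    finally show "W m r l j * real m ^ j * falling_fact x j * (\<Sum>k\<le>n. real (n choose k) * 
         (real m * (x - real j) + r) ^ k * (real m * real j) ^ (n - k)) =
         W m r l j * real m ^ j * falling_fact x j * (real m * x + r) ^ n" by simp
  qed
  also have "\<dots> = (real m * x + r) ^ (l + n)"
    by (simp add: W_expand[of m x r l] sum_distrib_right power_add)
  finally show ?thesis ..
qed

theorem mainTheorem10:
  fixes m l n :: nat and r x :: real
  assumes "m \<ge> 1" and "r \<ge> 0"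
  shows "dowling m r (l + n) x =
    (\<Sum>j\<le>l. \<Sum>k\<le>n. real (n choose k) * whitney2 m r l j * x ^ j
        * (real m * real j) ^ (n - k) * dowling m r k x)"
proof -
  have A: "acoef m r l n = W m r (l + n)"
    using assms(1) acoef_zero acoef_expand by (intro W_unique) auto
  have "dowling m r (l + n) x = (\<Sum>t\<le>l+n. acoef m r l n t * x ^ t)"
    by (simp add: dowling_def whitney2_eq[OF assms(1)] A)
  also have "\<dots> = (\<Sum>j\<le>l. \<Sum>k\<le>n. real (n choose k) * W m r l j * (real m * real j) ^ (n - k)
        * (\<Sum>i\<le>k. W m r k i * x ^ (i + j)))"
    by (rule a_sum)
  also have "\<dots> = (\<Sum>j\<le>l. \<Sum>k\<le>n. real (n choose k) * whitney2 m r l j * x ^ j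
        * (real m * real j) ^ (n - k) * dowling m r k x)"
  proof (intro sum.cong refl)
    fix j k
    have "(\<Sum>i\<le>k. W m r k i * x ^ (i + j)) = x ^ j * (\<Sum>i\<le>k. W m r k i * x ^ i)"
      by (simp add: sum_distrib_left power_add mult_ac)
    then show "real (n choose k) * W m r l j * (real m * real j) ^ (n - k)
        * (\<Sum>i\<le>k. W m r k i * x ^ (i + j)) = real (n choose k) * whitney2 m r l j * x ^ j
        * (real m * real j) ^ (n - k) * dowling m r k x"
      by (simp add: dowling_def whitney2_eq[OF assms(1)] mult_ac)
  qed
  finally show ?thesis .
qed

end
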